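(* Let $T$ be a finite tree. Then its line graph $L(T)$ is co-chordal if and only if $T$ is one of the following: (i) a star graph; (ii) a broom of diameter $3$; (iii) a (partially) whiskered star; (iv) a path $P_n$ with $2\leq n\leq 5$.
   Context: The line graph $L(G)$ has vertex set $E(G)$, two vertices adjacent iff the corresponding edges share a vertex. A graph is chordal if it has no induced cycle of length $>3$; it is co-chordal if its complement is chordal. A star has vertices $u,v_1,\dots,v_n$ and edges $\{u,v_i\}$. $P_n$ has vertices $u_1,\dots,u_n$ and edges $\{u_i,u_{i+1}\}$. A broom is obtained from $P_n$ by attaching $m$ new vertices via pendant edges to its first (or last) vertex. A (partially) whiskered star is obtained from a star by attaching a new pendant edge (with a new vertex) to each vertex of the star (respectively to each vertex of some subset of its vertices). *)

theory Defs
  imports Main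
begin

type_synonym 'a sgraph = "'a set \<times> 'a set set"

definition verts :: "'a sgraph \<Rightarrow> 'a set" where
  "verts G = fst G"

definition edges :: "'a sgraph \<Rightarrow> 'a set set" where
  "edges G = snd G"

definition simple_graph :: "'a sgraph \<Rightarrow> bool" where
  "simple_graph G \<longleftrightarrow>
     (\<forall>e\<in>edges G. \<exists>u v. u \<noteq> v \<and> u \<in> verts G \<and> v \<in> verts G \<and> e = {u, v})"

definition walk :: "'a sgraph \<Rightarrow> 'a list \<Rightarrow> bool" where
  "walk G xs \<longleftrightarrow> xs \<noteq> [] \<and> set xs \<subseteq> verts G \<and>
     (\<forall>i. Suc i < length xs \<longrightarrow> {xs ! i, xs ! Suc i} \<in> edges G)"

definition connected_graph :: "'a sgraph \<Rightarrow> bool" where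
  "connected_graph G \<longleftrightarrow>
     (\<forall>u\<in>verts G. \<forall>v\<in>verts G. \<exists>xs. walk G xs \<and> hd xs = u \<and> last xs = v)"

definition is_cycle :: "'a sgraph \<Rightarrow> 'a list \<Rightarrow> bool" where
  "is_cycle G xs \<longleftrightarrow> 3 \<le> length xs \<and> distinct xs \<and> walk G xs \<and> {last xs, hd xs} \<in> edges G"

definition tree :: "'a sgraph \<Rightarrow> bool" where
  "tree G \<longleftrightarrow> simple_graph G \<and> finite (verts G) \<and> verts G \<noteq> {} \<and>
     connected_graph G \<and> \<not> (\<exists>xs. is_cycle G xs)"

definition dist :: "'a sgraph \<Rightarrow> 'a \<Rightarrow> 'a \<Rightarrow> nat" where
  "dist G u v = (LEAST k. \<exists>xs. walk G xs \<and> hd xs = u \<and> last xs = v \<and> length xs = Suc k)"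

definition diameter :: "'a sgraph \<Rightarrow> nat" where
  "diameter G = Max {dist G u v | u v. u \<in> verts G \<and> v \<in> verts G}"

definition line_graph :: "'a sgraph \<Rightarrow> 'a set sgraph" where
  "line_graph G = (edges G,
     {{e, f} | e f. e \<in> edges G \<and> f \<in> edges G \<and> e \<noteq> f \<and> e \<inter> f \<noteq> {}})"

definition complement :: "'a sgraph \<Rightarrow> 'a sgraph" where
  "complement G = (verts G,
     {{u, v} | u v. u \<in> verts G \<and> v \<in> verts G \<and> u \<noteq> v \<and> {u, v} \<notin> edges G})"

definition induced_cycle :: "'a sgraph \<Rightarrow> 'a list \<Rightarrow> bool" where
  "induced_cycle G xs \<longleftrightarrow> distinct xs \<and> set xs \<subseteq> verts G \<and>
     (\<forall>i j. i < length xs \<longrightarrow> j < length xs \<longrightarrow> i \<noteq> j \<longrightarrow>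
        ({xs ! i, xs ! j} \<in> edges G \<longleftrightarrow>
           (Suc i mod length xs = j \<or> Suc j mod length xs = i)))"

definition chordal :: "'a sgraph \<Rightarrow> bool" where
  "chordal G \<longleftrightarrow> \<not> (\<exists>xs. length xs > 3 \<and> induced_cycle G xs)"

definition co_chordal :: "'a sgraph \<Rightarrow> bool" where
  "co_chordal G \<longleftrightarrow> chordal (complement G)"

definition isomorphic :: "'a sgraph \<Rightarrow> 'b sgraph \<Rightarrow> bool" where
  "isomorphic G H \<longleftrightarrow> (\<exists>f. bij_betw f (verts G) (verts H) \<and>
     (\<forall>u\<in>verts G. \<forall>v\<in>verts G. {u, v} \<in> edges G \<longleftrightarrow> {f u, f v} \<in> edges H))"

definition star_graph :: "nat \<Rightarrow> nat sgraph" where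
  "star_graph n = ({0..n}, {{0, i} | i. 1 \<le> i \<and> i \<le> n})"

definition path_graph :: "nat \<Rightarrow> nat sgraph" where
  "path_graph n = ({1..n}, {{i, Suc i} | i. 1 \<le> i \<and> Suc i \<le> n})"

definition broom :: "nat \<Rightarrow> nat \<Rightarrow> nat sgraph" where
  "broom n m = ({1..n + m},
     {{i, Suc i} | i. 1 \<le> i \<and> Suc i \<le> n} \<union> {{1, j} | j. n < j \<and> j \<le> n + m})"

definition whiskered_star :: "nat \<Rightarrow> nat set \<Rightarrow> nat sgraph" where
  "whiskered_star n S = ({0..n} \<union> (\<lambda>i. n + 1 + i) ` S,
     {{0, i} | i. 1 \<le> i \<and> i \<le> n} \<union> {{i, n + 1 + i} | i. i \<in> S})"

end

theory Submission
  imports Defs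
begin

definition Qc :: "'a sgraph \<Rightarrow> 'a \<Rightarrow> bool" where
  "Qc G c \<longleftrightarrow> (\<forall>e\<in>edges G. \<forall>f\<in>edges G. e \<noteq> f \<longrightarrow> c \<notin> e \<longrightarrow> c \<notin> f \<longrightarrow> e \<inter> f = {})"

lemma cl_edge:
  assumes "e \<in> edges G" "f \<in> edges G"
  shows "{e, f} \<in> edges (complement (line_graph G)) \<longleftrightarrow> e \<noteq> f \<and> e \<inter> f = {}"
  using assms unfolding complement_def line_graph_def edges_def verts_def
  by (auto simp: doubleton_eq_iff)

lemma cl_verts: "verts (complement (line_graph G)) = edges G"
  unfolding complement_def line_graph_def edges_def verts_def by simp

lemma smod: "x < k \<Longrightarrow> Suc x mod k = (if Suc x = k then 0 else Suc x)"
  by auto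

lemma Q_chordal:
  assumes Q: "Qc G c"
  shows "chordal (complement (line_graph G))"
  unfolding chordal_def
proof
  assume "\<exists>xs. length xs > 3 \<and> induced_cycle (complement (line_graph G)) xs"
  then obtain xs where k3: "length xs > 3" and ic: "induced_cycle (complement (line_graph G)) xs" by blast
  define k where "k = length xs"
  have dist: "distinct xs" and sub: "set xs \<subseteq> edges G"
    using ic cl_verts unfolding induced_cycle_def by metis+
  have adj: "xs ! i \<inter> xs ! j = {} \<longleftrightarrow> (Suc i mod k = j \<or> Suc j mod k = i)"
    if "i < k" "j < k" "i \<noteq> j" for i j
  proof -
    have "xs ! i \<in> edges G" "xs ! j \<in> edges G" using that sub k_def by auto
    moreover have "xs ! i \<noteq> xs ! j" using that dist k_def by (simp add: nth_eq_iff_index_eq)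
    ultimately show ?thesis using ic that cl_edge[of "xs ! i" G "xs ! j"] unfolding induced_cycle_def k_def
      by auto
  qed
  have inE: "i < k \<Longrightarrow> xs ! i \<in> edges G" for i using sub k_def by auto
  have neq: "i < k \<Longrightarrow> j < k \<Longrightarrow> i \<noteq> j \<Longrightarrow> xs ! i \<noteq> xs ! j" for i j
    using dist k_def by (simp add: nth_eq_iff_index_eq)
  have k3': "k > 3" using k3 k_def by simp
  show False
  proof (cases "\<exists>i<k. c \<in> xs ! i")
    case True
    then obtain i where i: "i < k" "c \<in> xs ! i" by blast
    define j1 where "j1 = (if Suc i = k then 0 else Suc i)"
    define j2 where "j2 = (if i = 0 then k - 1 else i - 1)"
    have j1k: "j1 < k" "j1 \<noteq> i" and j2k: "j2 < k" "j2 \<noteq> i" and j12: "j1 \<noteq> j2"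
      using i k3' unfolding j1_def j2_def by auto
    have a1: "Suc i mod k = j1" using i smod j1_def by simp
    have a2: "Suc j2 mod k = i" using i k3' smod[of j2 k] j2k unfolding j2_def by (auto split: if_splits)
    have "xs ! i \<inter> xs ! j1 = {}" using adj[of i j1] i j1k a1 by simp
    hence c1: "c \<notin> xs ! j1" using i by auto
    have "xs ! j2 \<inter> xs ! i = {}" using adj[of j2 i] i j2k a2 by simp
    hence c2: "c \<notin> xs ! j2" using i by auto
    have "xs ! j1 \<inter> xs ! j2 = {}" using Q c1 c2 inE[OF j1k(1)] inE[OF j2k(1)] neq[OF j1k(1) j2k(1) j12]
      unfolding Qc_def by blast
    hence "Suc j1 mod k = j2 \<or> Suc j2 mod k = j1" using adj[OF j1k(1) j2k(1) j12] by simp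
    thus False using smod[OF j1k(1)] smod[OF j2k(1)] i k3' unfolding j1_def j2_def
      by (auto split: if_splits)
  next
    case False
    have "xs ! 0 \<inter> xs ! 2 = {}" using Q False k3' inE[of 0] inE[of 2] neq[of 0 2]
      unfolding Qc_def by auto
    hence "Suc 0 mod k = 2 \<or> Suc 2 mod k = 0" using adj[of 0 2] k3' by simp
    thus False using k3' by auto
  qed
qed

definition noP3 :: "'a sgraph \<Rightarrow> bool" where
  "noP3 G \<longleftrightarrow> \<not> (\<exists>a b c d e f. distinct [a,b,c,d,e,f] \<and> {a,b} \<in> edges G \<and> {b,c} \<in> edges G
      \<and> {d,e} \<in> edges G \<and> {e,f} \<in> edges G)"

lemma four_cases: "(i::nat) < 4 \<Longrightarrow> i = 0 \<or> i = 1 \<or> i = 2 \<or> i = 3" by arith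

lemma cochordal_noP3:
  assumes "co_chordal (line_graph G)"
  shows "noP3 G"
  unfolding noP3_def
proof
  assume "\<exists>a b c d e f. distinct [a,b,c,d,e,f] \<and> {a,b} \<in> edges G \<and> {b,c} \<in> edges G
      \<and> {d,e} \<in> edges G \<and> {e,f} \<in> edges G"
  then obtain a b c d e f where d: "distinct [a,b,c,d,e,f]" and
    E: "{a,b} \<in> edges G" "{b,c} \<in> edges G" "{d,e} \<in> edges G" "{e,f} \<in> edges G" by blast
  define xs where "xs = [{a,b},{d,e},{b,c},{e,f}]"
  have dxs: "distinct xs" using d unfolding xs_def by (auto simp: doubleton_eq_iff)
  have sxs: "set xs \<subseteq> verts (complement (line_graph G))" using E unfolding cl_verts xs_def by auto
  have inE: "i < 4 \<Longrightarrow> xs ! i \<in> edges G" for i using E four_cases[of i] unfolding xs_def by auto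
  have adj: "{xs ! i, xs ! j} \<in> edges (complement (line_graph G)) \<longleftrightarrow>
           (Suc i mod length xs = j \<or> Suc j mod length xs = i)"
    if "i < length xs" "j < length xs" "i \<noteq> j" for i j
  proof -
    have l: "length xs = 4" unfolding xs_def by simp
    have "xs ! i \<noteq> xs ! j" using dxs that by (simp add: nth_eq_iff_index_eq)
    hence "{xs ! i, xs ! j} \<in> edges (complement (line_graph G)) \<longleftrightarrow> xs ! i \<inter> xs ! j = {}"
      using cl_edge[OF inE inE, of i j] that l by simp
    also have "\<dots> \<longleftrightarrow> (Suc i mod 4 = j \<or> Suc j mod 4 = i)"
      using four_cases[of i] four_cases[of j] that d l unfolding xs_def by auto
    finally show ?thesis using l by simp
  qed
  have "induced_cycle (complement (line_graph G)) xs"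
    unfolding induced_cycle_def using dxs sxs adj by blast
  moreover have "length xs > 3" unfolding xs_def by simp
  ultimately show False using assms unfolding co_chordal_def chordal_def by blast
qed

definition nbr :: "'a sgraph \<Rightarrow> 'a \<Rightarrow> 'a set" where
  "nbr G v = {w. {v, w} \<in> edges G}"

lemma simple_edge:
  assumes "simple_graph G" "{u, v} \<in> edges G"
  shows "u \<noteq> v \<and> u \<in> verts G \<and> v \<in> verts G"
  using assms unfolding simple_graph_def by (metis doubleton_eq_iff)

lemma walk_Nil: "\<not> walk G []" unfolding walk_def by simp

lemma walk_single: "walk G [x] \<longleftrightarrow> x \<in> verts G" unfolding walk_def by simp

lemma walk_Cons2: "walk G (x # y # ys) \<longleftrightarrow> {x, y} \<in> edges G \<and> x \<in> verts G \<and> walk G (y # ys)"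
proof
  assume w: "walk G (x # y # ys)"
  have "{x, y} \<in> edges G" using w unfolding walk_def by (metis length_Cons nth_Cons_0 nth_Cons_Suc zero_less_Suc Suc_less_eq)
  moreover have "\<forall>i. Suc i < length (y # ys) \<longrightarrow> {(y # ys) ! i, (y # ys) ! Suc i} \<in> edges G"
  proof (intro allI impI)
    fix i assume "Suc i < length (y # ys)"
    hence "Suc (Suc i) < length (x # y # ys)" by simp
    thus "{(y # ys) ! i, (y # ys) ! Suc i} \<in> edges G" using w unfolding walk_def by fastforce
  qed
  ultimately show "{x, y} \<in> edges G \<and> x \<in> verts G \<and> walk G (y # ys)" using w unfolding walk_def by auto
next
  assume a: "{x, y} \<in> edges G \<and> x \<in> verts G \<and> walk G (y # ys)"
  show "walk G (x # y # ys)" unfolding walk_def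
  proof (intro conjI allI impI)
    show "set (x # y # ys) \<subseteq> verts G" using a unfolding walk_def by auto
    fix i assume i: "Suc i < length (x # y # ys)"
    show "{(x # y # ys) ! i, (x # y # ys) ! Suc i} \<in> edges G"
    proof (cases i)
      case 0 thus ?thesis using a by simp
    next
      case (Suc j) thus ?thesis using a i unfolding walk_def by auto
    qed
  qed simp
qed

lemma tree_no_cycle:
  assumes "tree G" "distinct xs" "3 \<le> length xs" "walk G xs" "{last xs, hd xs} \<in> edges G"
  shows False
  using assms unfolding tree_def is_cycle_def by blast

lemma tree_tri:
  assumes "tree G" "distinct [a, b, c]" "{a, b} \<in> edges G" "{b, c} \<in> edges G" "{c, a} \<in> edges G"
  shows False
proof -
  have s: "simple_graph G" using assms(1) tree_def by blast
  show False using tree_no_cycle[OF assms(1,2)] assms(3-) simple_edge[OF s]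
    by (simp add: walk_Cons2 walk_single)
qed

lemma tree_cyc4:
  assumes "tree G" "distinct [a, b, c, d]" "{a, b} \<in> edges G" "{b, c} \<in> edges G" "{c, d} \<in> edges G" "{d, a} \<in> edges G"
  shows False
proof -
  have s: "simple_graph G" using assms(1) tree_def by blast
  show False using tree_no_cycle[OF assms(1,2)] assms(3-) simple_edge[OF s]
    by (simp add: walk_Cons2 walk_single)
qed

lemma tree_cyc5:
  assumes "tree G" "distinct [a, b, c, d, e]" "{a, b} \<in> edges G" "{b, c} \<in> edges G" "{c, d} \<in> edges G"
    "{d, e} \<in> edges G" "{e, a} \<in> edges G"
  shows False
proof -
  have s: "simple_graph G" using assms(1) tree_def by blast
  show False using tree_no_cycle[OF assms(1,2)] assms(3-) simple_edge[OF s]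
    by (simp add: walk_Cons2 walk_single)
qed

lemma notQ_P3:
  assumes "simple_graph G" "\<not> Qc G c"
  shows "\<exists>g a b. a \<noteq> b \<and> {g, a} \<in> edges G \<and> {g, b} \<in> edges G \<and> c \<noteq> g \<and> c \<noteq> a \<and> c \<noteq> b"
proof -
  obtain e f where ef: "e \<in> edges G" "f \<in> edges G" "e \<noteq> f" "c \<notin> e" "c \<notin> f" "e \<inter> f \<noteq> {}"
    using assms(2) unfolding Qc_def by blast
  obtain p1 p2 where e: "e = {p1, p2}" using ef(1) assms(1) unfolding simple_graph_def by blast
  obtain q1 q2 where f: "f = {q1, q2}" using ef(2) assms(1) unfolding simple_graph_def by blast
  show ?thesis using ef unfolding e f by (auto simp: insert_commute) (metis insert_commute)+
qed

lemma card_le2: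
  assumes "finite A" "\<not> (\<exists>p q r. p \<in> A \<and> q \<in> A \<and> r \<in> A \<and> p \<noteq> q \<and> p \<noteq> r \<and> q \<noteq> r)"
  shows "card A \<le> 2"
proof (cases "A = {}")
  case False
  then obtain a where a: "a \<in> A" by blast
  show ?thesis
  proof (cases "A - {a} = {}")
    case True
    hence "A = {a}" using a by blast
    thus ?thesis by simp
  next
    case False
    then obtain b where b: "b \<in> A" "b \<noteq> a" by blast
    have "A \<subseteq> {a, b}" using assms(2) a b by blast
    hence "card A \<le> card {a, b}" by (rule card_mono[rotated]) simp
    thus ?thesis using b by simp
  qed
qed simp

lemma two_of_card:
  assumes "2 \<le> card A"
  shows "\<exists>p q. p \<noteq> q \<and> p \<in> A \<and> q \<in> A"
proof -
  have fin: "finite A" using assms card.infinite by fastforce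
  have "\<not> card A \<le> Suc 0" using assms by simp
  thus ?thesis using card_le_Suc0_iff_eq[OF fin] by blast
qed

lemma nbr_eq2:
  assumes "finite (nbr G z)" "card (nbr G z) \<le> 2" "{z, p} \<in> edges G" "{z, q} \<in> edges G" "p \<noteq> q"
  shows "nbr G z = {p, q}"
proof -
  have sub: "{p, q} \<subseteq> nbr G z" using assms(3,4) unfolding nbr_def by auto
  have "card {p, q} = 2" using assms(5) by simp
  hence "card {p, q} = card (nbr G z)" using card_mono[OF assms(1) sub] assms(2) by simp
  thus ?thesis using card_subset_eq[OF assms(1) sub] by simp
qed

lemma finite_nbr:
  assumes "tree G" shows "finite (nbr G z)"
proof -
  have "nbr G z \<subseteq> verts G" using assms simple_edge unfolding tree_def nbr_def by fastforce
  thus ?thesis using assms unfolding tree_def using finite_subset by blast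
qed

lemma pathcase:
  assumes T: "tree G" and np: "noP3 G" and deg: "\<forall>z. card (nbr G z) \<le> 2"
    and d: "distinct [t, y, u, w, v]"
    and E: "{t, y} \<in> edges G" "{y, u} \<in> edges G" "{u, w} \<in> edges G" "{w, v} \<in> edges G"
  shows "Qc G u"
proof (rule ccontr)
  assume nq: "\<not> Qc G u"
  have s: "simple_graph G" using T tree_def by blast
  have sym: "{p, q} \<in> edges G \<longleftrightarrow> {q, p} \<in> edges G" for p q by (simp add: insert_commute)
  have Ny: "nbr G y = {t, u}" using nbr_eq2[OF finite_nbr[OF T] deg[rule_format] _ _, of y t u] E d sym by auto
  have Nu: "nbr G u = {y, w}" using nbr_eq2[OF finite_nbr[OF T] deg[rule_format] _ _, of u y w] E d sym by auto
  have Nw: "nbr G w = {u, v}" using nbr_eq2[OF finite_nbr[OF T] deg[rule_format] _ _, of w u v] E d sym by auto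
  have Ay: "{y, z} \<in> edges G \<longleftrightarrow> z = t \<or> z = u" for z using Ny unfolding nbr_def by blast
  have Aw: "{w, z} \<in> edges G \<longleftrightarrow> z = u \<or> z = v" for z using Nw unfolding nbr_def by blast
  have nvt: "{v, t} \<notin> edges G" using tree_cyc5[OF T d] E by blast
  obtain g a b where P: "a \<noteq> b" "{g, a} \<in> edges G" "{g, b} \<in> edges G" "u \<noteq> g" "u \<noteq> a" "u \<noteq> b"
    using notQ_P3[OF s nq] by blast
  have ga: "g \<noteq> a" "g \<noteq> b" using P simple_edge[OF s] by blast+
  have m1: "\<not> distinct [a, g, b, t, y, u]" using np P(2,3) E sym unfolding noP3_def by blast
  have m2: "\<not> distinct [a, g, b, y, u, w]" using np P(2,3) E sym unfolding noP3_def by blast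
  have m3: "\<not> distinct [a, g, b, u, w, v]" using np P(2,3) E sym unfolding noP3_def by blast
  have Ay': "{z, y} \<in> edges G \<longleftrightarrow> z = t \<or> z = u" for z using Ay sym by blast
  have Aw': "{z, w} \<in> edges G \<longleftrightarrow> z = u \<or> z = v" for z using Aw sym by blast
  have ntv: "{t, v} \<notin> edges G" using nvt sym by blast
  show False
  proof (cases "y \<in> {a, g, b}")
    case True
    then consider "y = g" | "y = a" | "y = b" by blast
    thus False
    proof cases
      case 1 thus False using P Ay by metis
    next
      case 2
      hence "g = t" using P Ay' by metis
      thus False using m3 P ga d 2 Aw' ntv by auto
    next
      case 3
      hence "g = t" using P Ay' by metis
      thus False using m3 P ga d 3 Aw' ntv by auto
    qed
  next
    case False
    hence wP: "w \<in> {a, g, b}" using m2 P ga d by auto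
    then consider "w = g" | "w = a" | "w = b" by blast
    thus False
    proof cases
      case 1 thus False using P Aw by metis
    next
      case 2
      hence "g = v" using P Aw' by metis
      thus False using m1 P ga d 2 False nvt by auto
    next
      case 3
      hence "g = v" using P Aw' by metis
      thus False using m1 P ga d 3 False nvt by auto
    qed
  qed
qed

lemma exists_center:
  assumes T: "tree G" and np: "noP3 G"
  shows "\<exists>c\<in>verts G. Qc G c"
proof -
  have s: "simple_graph G" and fin: "finite (verts G)" and ne: "verts G \<noteq> {}" using T tree_def by blast+
  have sym: "{p, q} \<in> edges G \<longleftrightarrow> {q, p} \<in> edges G" for p q by (simp add: insert_commute)
  define m where "m = Max ((\<lambda>z. card (nbr G z)) ` verts G)"
  have "m \<in> (\<lambda>z. card (nbr G z)) ` verts G" unfolding m_def using fin ne by (intro Max_in) auto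
  then obtain y where y: "y \<in> verts G" "card (nbr G y) = m" by blast
  have maxy: "card (nbr G z) \<le> card (nbr G y)" for z
  proof (cases "z \<in> verts G")
    case True thus ?thesis using y fin unfolding m_def by simp
  next
    case False
    hence "nbr G z = {}" unfolding nbr_def using simple_edge[OF s] by blast
    thus ?thesis by simp
  qed
  show ?thesis
  proof (cases "Qc G y")
    case True thus ?thesis using y by blast
  next
    case False
    obtain w u v where P: "u \<noteq> v" "{w, u} \<in> edges G" "{w, v} \<in> edges G" "y \<noteq> w" "y \<noteq> u" "y \<noteq> v"
      using notQ_P3[OF s False] by blast
    have wuv: "w \<noteq> u" "w \<noteq> v" using P simple_edge[OF s] by blast+
    have T1: False if "p \<in> nbr G y" "q \<in> nbr G y" "p \<noteq> q" "p \<in> {u, w, v}" "q \<in> {u, w, v}" for p q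
    proof -
      have e: "{y, p} \<in> edges G" "{y, q} \<in> edges G" using that unfolding nbr_def by auto
      have A: False if "{y, u} \<in> edges G" "{y, w} \<in> edges G"
        using tree_tri[OF T, of y u w] that P wuv sym by auto
      have B: False if "{y, v} \<in> edges G" "{y, w} \<in> edges G"
        using tree_tri[OF T, of y v w] that P wuv sym by auto
      have C: False if "{y, u} \<in> edges G" "{y, v} \<in> edges G"
        using tree_cyc4[OF T, of y u w v] that P wuv sym by auto
      show False using A B C e that by auto
    qed
    have T2: False if "p \<in> nbr G y" "q \<in> nbr G y" "p \<noteq> q" "p \<notin> {u, w, v}" "q \<notin> {u, w, v}" for p q
    proof -
      have e: "{y, p} \<in> edges G" "{y, q} \<in> edges G" using that unfolding nbr_def by auto
      have "p \<noteq> y" "q \<noteq> y" using e simple_edge[OF s] by blast+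
      hence "distinct [p, y, q, u, w, v]" using that P wuv by auto
      thus False using np e P sym unfolding noP3_def by blast
    qed
    have c2: "card (nbr G y) \<le> 2"
      apply (rule card_le2[OF finite_nbr[OF T]])
      using T1 T2 by metis
    have deg: "\<forall>z. card (nbr G z) \<le> 2" using maxy c2 le_trans by blast
    have "{u, v} \<subseteq> nbr G w" using P unfolding nbr_def by auto
    hence "card {u, v} \<le> card (nbr G w)" using card_mono[OF finite_nbr[OF T]] by blast
    hence "2 \<le> card (nbr G y)" using P(1) maxy[of w] by simp
    then obtain p q where pq: "p \<noteq> q" "p \<in> nbr G y" "q \<in> nbr G y" using two_of_card by blast
    obtain s' t where st: "s' \<in> nbr G y" "t \<in> nbr G y" "s' \<in> {u, w, v}" "t \<notin> {u, w, v}"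
      using T1 T2 pq by metis
    have ts: "t \<noteq> y" "{t, y} \<in> edges G" "{y, s'} \<in> edges G"
      using st simple_edge[OF s] sym unfolding nbr_def by auto
    consider "s' = w" | "s' = u" | "s' = v" using st by blast
    thus ?thesis
    proof cases
      case 1
      have "{u, v, y} \<subseteq> nbr G w" using P ts 1 sym unfolding nbr_def by auto
      hence "card {u, v, y} \<le> card (nbr G w)" using card_mono[OF finite_nbr[OF T]] by blast
      thus ?thesis using P deg[rule_format, of w] by simp
    next
      case 2
      have "Qc G u" using pathcase[OF T np deg, of t y u w v] ts 2 st P wuv sym by auto
      thus ?thesis using P simple_edge[OF s] by blast
    next
      case 3
      have "Qc G v" using pathcase[OF T np deg, of t y v w u] ts 3 st P wuv sym by auto
      thus ?thesis using P simple_edge[OF s] by blast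
    qed
  qed
qed

lemma iso_from_inv:
  assumes b: "bij_betw h (verts H) (verts G)"
    and e: "\<forall>a\<in>verts H. \<forall>b\<in>verts H. {a, b} \<in> edges H \<longleftrightarrow> {h a, h b} \<in> edges G"
  shows "isomorphic G H"
  unfolding isomorphic_def
proof (intro exI conjI ballI)
  let ?f = "inv_into (verts H) h"
  show "bij_betw ?f (verts G) (verts H)" using b by (rule bij_betw_inv_into)
  fix u v assume u: "u \<in> verts G" and v: "v \<in> verts G"
  have fu: "?f u \<in> verts H" "h (?f u) = u" using b u bij_betw_imp_surj_on inv_into_into f_inv_into_f
    by metis+
  have fv: "?f v \<in> verts H" "h (?f v) = v" using b v bij_betw_imp_surj_on inv_into_into f_inv_into_f
    by metis+
  show "{u, v} \<in> edges G \<longleftrightarrow> {?f u, ?f v} \<in> edges H" using e fu fv by metis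
qed

lemma walk_closed:
  assumes "walk G xs" "hd xs \<in> X" "\<And>x z. x \<in> X \<Longrightarrow> {x, z} \<in> edges G \<Longrightarrow> z \<in> X"
  shows "last xs \<in> X"
  using assms
proof (induction xs)
  case Nil thus ?case by (simp add: walk_Nil)
next
  case (Cons x xs)
  show ?case
  proof (cases xs)
    case Nil thus ?thesis using Cons by simp
  next
    case (Cons y ys)
    note xs = this
    have w: "walk G (x # y # ys)" using Cons.prems(1) xs by simp
    have "walk G xs" "{x, y} \<in> edges G" using walk_Cons2[of G x y ys] w xs by simp_all
    moreover have "y \<in> X" using Cons.prems(2,3) xs calculation by simp
    ultimately show ?thesis using Cons.IH Cons.prems(3) xs by simp
  qed
qed

lemma whisk_edge:
  assumes "S \<subseteq> {1..n}" "a \<in> verts (whiskered_star n S)" "b \<in> verts (whiskered_star n S)"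
  shows "{a, b} \<in> edges (whiskered_star n S) \<longleftrightarrow>
    (a = 0 \<and> 1 \<le> b \<and> b \<le> n) \<or> (b = 0 \<and> 1 \<le> a \<and> a \<le> n) \<or> (a \<in> S \<and> b = n + 1 + a) \<or> (b \<in> S \<and> a = n + 1 + b)"
  using assms unfolding whiskered_star_def edges_def verts_def
  by (auto simp: doubleton_eq_iff)

lemma whiskered_of_Q:
  assumes T: "tree G" and cV: "c \<in> verts G" and Q: "Qc G c"
  shows "\<exists>n S. S \<subseteq> {0..n} \<and> isomorphic G (whiskered_star n S)"
proof -
  have s: "simple_graph G" and conn: "connected_graph G" using T unfolding tree_def by simp_all
  have sym: "{p, q} \<in> edges G \<longleftrightarrow> {q, p} \<in> edges G" for p q by (simp add: insert_commute)
  define Nc where "Nc = nbr G c"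
  have finN: "finite Nc" using finite_nbr[OF T] Nc_def by simp
  define n where "n = card Nc"
  have "\<exists>h. bij_betw h {1..n} Nc" using ex_bij_betw_nat_finite_1[OF finN] by (simp add: n_def)
  then obtain gg where gg: "bij_betw gg {1..n} Nc" by (elim exE)
  have ggN: "k \<in> {1..n} \<Longrightarrow> gg k \<in> Nc" for k by (rule bij_betw_apply[OF gg])
  have ggi: "k \<in> {1..n} \<Longrightarrow> l \<in> {1..n} \<Longrightarrow> gg k = gg l \<Longrightarrow> k = l" for k l
    using gg unfolding bij_betw_def inj_on_def by (elim conjE) (drule bspec, assumption, drule bspec, assumption, simp)
  have ggs: "Nc = gg ` {1..n}" using gg unfolding bij_betw_def by simp
  have F1: "x \<in> Nc \<Longrightarrow> x \<noteq> c \<and> x \<in> verts G \<and> {c, x} \<in> edges G" for x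
    using simple_edge[OF s] unfolding Nc_def nbr_def by blast
  have F2: "x \<in> Nc \<Longrightarrow> x' \<in> Nc \<Longrightarrow> {x, x'} \<notin> edges G" for x x'
  proof
    assume a: "x \<in> Nc" "x' \<in> Nc" "{x, x'} \<in> edges G"
    have "x \<noteq> x'" using a simple_edge[OF s] by blast
    thus False using tree_tri[OF T, of c x x'] a F1 sym by auto
  qed
  have Qe: "e \<in> edges G \<Longrightarrow> f \<in> edges G \<Longrightarrow> e \<noteq> f \<Longrightarrow> c \<notin> e \<Longrightarrow> c \<notin> f \<Longrightarrow> e \<inter> f = {}" for e f
    using Q unfolding Qc_def by blast
  have F3: "x \<in> Nc \<Longrightarrow> {x, z} \<in> edges G \<Longrightarrow> z \<noteq> c \<Longrightarrow> z \<notin> Nc" for x z using F2 by blast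
  have F4: "x \<in> Nc \<Longrightarrow> {x, z} \<in> edges G \<Longrightarrow> {x, z'} \<in> edges G \<Longrightarrow> z \<noteq> c \<Longrightarrow> z' \<noteq> c \<Longrightarrow> z = z'"
    for x z z'
  proof (rule ccontr)
    assume a: "x \<in> Nc" "{x, z} \<in> edges G" "{x, z'} \<in> edges G" "z \<noteq> c" "z' \<noteq> c" "z \<noteq> z'"
    have "{x, z} \<noteq> {x, z'}" using a(6) by (auto simp: doubleton_eq_iff)
    thus False using Qe[OF a(2,3)] a F1 by auto
  qed
  have F5: "x \<in> Nc \<Longrightarrow> x' \<in> Nc \<Longrightarrow> {x, z} \<in> edges G \<Longrightarrow> {x', z} \<in> edges G \<Longrightarrow> z \<noteq> c \<Longrightarrow> x = x'"
    for x x' z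
  proof (rule ccontr)
    assume a: "x \<in> Nc" "x' \<in> Nc" "{x, z} \<in> edges G" "{x', z} \<in> edges G" "z \<noteq> c" "x \<noteq> x'"
    have "{x, z} \<noteq> {x', z}" using a(6) by (auto simp: doubleton_eq_iff)
    thus False using Qe[OF a(3,4)] a F1 by auto
  qed
  have F6: "x \<in> Nc \<Longrightarrow> {x, z} \<in> edges G \<Longrightarrow> z \<noteq> c \<Longrightarrow> {z, q} \<in> edges G \<Longrightarrow> q = x" for x z q
  proof (rule ccontr)
    assume a: "x \<in> Nc" "{x, z} \<in> edges G" "z \<noteq> c" "{z, q} \<in> edges G" "q \<noteq> x"
    show False
    proof (cases "q = c")
      case True
      hence "z \<in> Nc" using a sym unfolding Nc_def nbr_def by auto
      thus False using F2 a by blast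
    next
      case False
      have "{x, z} \<noteq> {z, q}" using a(5) by (auto simp: doubleton_eq_iff)
      thus False using Qe[OF a(2,4)] a F1 False by auto
    qed
  qed
  define wsk where "wsk x = (SOME z. {x, z} \<in> edges G \<and> z \<noteq> c)" for x
  define S where "S = {i \<in> {1..n}. \<exists>z. {gg i, z} \<in> edges G \<and> z \<noteq> c}"
  have S1: "S \<subseteq> {1..n}" unfolding S_def by blast
  have F7: "i \<in> S \<Longrightarrow> {gg i, wsk (gg i)} \<in> edges G \<and> wsk (gg i) \<noteq> c" for i
    unfolding S_def wsk_def by (rule someI_ex) blast
  define h where "h k = (if k = 0 then c else if k \<le> n then gg k else wsk (gg (k - n - 1)))" for k
  define W where "W = verts (whiskered_star n S)"
  have W: "W = {0..n} \<union> (\<lambda>i. n + 1 + i) ` S" unfolding W_def whiskered_star_def verts_def by simp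
  have h0: "h 0 = c" unfolding h_def by simp
  have h1: "1 \<le> k \<Longrightarrow> k \<le> n \<Longrightarrow> h k = gg k" for k unfolding h_def by simp
  have h2: "h (n + 1 + i) = wsk (gg i)" for i unfolding h_def by simp
  have G1: "k \<in> {1..n} \<Longrightarrow> {c, gg k} \<in> edges G" for k using F1 ggN by blast
  have G2: "k \<in> {1..n} \<Longrightarrow> l \<in> {1..n} \<Longrightarrow> {gg k, gg l} \<notin> edges G" for k l using F2 ggN by blast
  have G3: "{c, c} \<notin> edges G" using simple_edge[OF s] by blast
  have G4: "i \<in> S \<Longrightarrow> {c, wsk (gg i)} \<notin> edges G" for i
    using F3[of "gg i" "wsk (gg i)"] F7 ggN S1 unfolding Nc_def nbr_def by blast
  have G5: "k \<in> {1..n} \<Longrightarrow> i \<in> S \<Longrightarrow> {gg k, wsk (gg i)} \<in> edges G \<longleftrightarrow> k = i" for k i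
    using F7[of i] F5[of "gg k" "gg i" "wsk (gg i)"] ggN S1 ggi by blast
  have G6: "i \<in> S \<Longrightarrow> j \<in> S \<Longrightarrow> {wsk (gg i), wsk (gg j)} \<notin> edges G" for i j
  proof
    assume a: "i \<in> S" "j \<in> S" "{wsk (gg i), wsk (gg j)} \<in> edges G"
    have "wsk (gg j) = gg i" using F6[of "gg i" "wsk (gg i)" "wsk (gg j)"] F7[OF a(1)] a ggN S1 by blast
    moreover have "wsk (gg j) \<notin> Nc" using F3[of "gg j" "wsk (gg j)"] F7[OF a(2)] ggN S1 a by blast
    ultimately show False using ggN S1 a by auto
  qed
  have edges_ok: "\<forall>a\<in>W. \<forall>b\<in>W. {a, b} \<in> edges (whiskered_star n S) \<longleftrightarrow> {h a, h b} \<in> edges G"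
  proof (intro ballI)
    fix a b assume a: "a \<in> W" and b: "b \<in> W"
    have cls: "x = 0 \<or> (1 \<le> x \<and> x \<le> n) \<or> (\<exists>i\<in>S. x = n + 1 + i)" if "x \<in> W" for x
      using that W by auto
    have sym': "{h b, h a} \<in> edges G \<longleftrightarrow> {h a, h b} \<in> edges G" using sym by blast
    note wE = whisk_edge[OF S1 a[unfolded W_def] b[unfolded W_def]]
    show "{a, b} \<in> edges (whiskered_star n S) \<longleftrightarrow> {h a, h b} \<in> edges G"
      using cls[OF a] cls[OF b]
    proof (elim disjE bexE)
      show ?thesis if "a = 0" "b = 0" using that wE h0 G3 by simp
      show ?thesis if "a = 0" "1 \<le> b \<and> b \<le> n" using that wE h0 h1 G1 by simp
      show ?thesis if "a = 0" "i \<in> S" "b = n + 1 + i" for i using that wE h0 h2 G4 S1 by auto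
      show ?thesis if "1 \<le> a \<and> a \<le> n" "b = 0" using that wE h0 h1 G1 sym by simp
      show ?thesis if "1 \<le> a \<and> a \<le> n" "1 \<le> b \<and> b \<le> n" using that wE h1 G2 by simp
      show ?thesis if "1 \<le> a \<and> a \<le> n" "i \<in> S" "b = n + 1 + i" for i using that wE h1 h2 G5 S1 by auto
      show ?thesis if "i \<in> S" "a = n + 1 + i" "b = 0" for i using that wE h0 h2 G4 S1 sym by auto
      show ?thesis if "i \<in> S" "a = n + 1 + i" "1 \<le> b \<and> b \<le> n" for i using that wE h1 h2 G5[of b i] S1 sym by auto
      show ?thesis if "i \<in> S" "a = n + 1 + i" "j \<in> S" "b = n + 1 + j" for i j using that wE h2 G6 S1 by auto
    qed
  qed
  have hW: "h ` W \<subseteq> verts G"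
  proof
    fix x assume "x \<in> h ` W"
    then obtain k where k: "k \<in> W" "x = h k" by blast
    have "k = 0 \<or> (1 \<le> k \<and> k \<le> n) \<or> (\<exists>i\<in>S. k = n + 1 + i)" using k W by auto
    thus "x \<in> verts G"
    proof (elim disjE bexE)
      assume "k = 0" thus ?thesis using k h0 cV by simp
    next
      assume "1 \<le> k \<and> k \<le> n" thus ?thesis using k h1 F1 ggN by force
    next
      fix i assume "i \<in> S" "k = n + 1 + i"
      thus ?thesis using k h2 F7 simple_edge[OF s] by metis
    qed
  qed
  have closed: "z \<in> h ` W" if xa: "x \<in> h ` W" and xz: "{x, z} \<in> edges G" for x z
  proof -
    obtain k where k: "k \<in> W" "x = h k" using xa by blast
    have "k = 0 \<or> (1 \<le> k \<and> k \<le> n) \<or> (\<exists>i\<in>S. k = n + 1 + i)" using k W by auto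
    thus ?thesis
    proof (elim disjE bexE)
      assume "k = 0"
      hence "z \<in> Nc" using k xz h0 unfolding Nc_def nbr_def by simp
      then obtain l where "l \<in> {1..n}" "z = gg l" using ggs by blast
      thus ?thesis using h1[of l] W by force
    next
      assume kk: "1 \<le> k \<and> k \<le> n"
      show ?thesis
      proof (cases "z = c")
        case True thus ?thesis using h0 W by force
      next
        case False
        have "x = gg k" using h1 kk k by simp
        hence kS: "k \<in> S" using xz False kk unfolding S_def by auto
        have "z = wsk (gg k)" using F4[of "gg k" z "wsk (gg k)"] F7[OF kS] ggN kk xz False \<open>x = gg k\<close> by auto
        thus ?thesis using h2[of k] W kS by force
      qed
    next
      fix i assume i: "i \<in> S" "k = n + 1 + i"
      have "z = gg i" using F6[of "gg i" "wsk (gg i)" z] F7[OF i(1)] ggN S1 i k xz h2 by auto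
      thus ?thesis using h1[of i] W S1 i by force
    qed
  qed
  have Wh: "verts G \<subseteq> h ` W"
  proof
    fix v assume v: "v \<in> verts G"
    obtain xs where xs: "walk G xs" "hd xs = c" "last xs = v" using conn cV v unfolding connected_graph_def by blast
    have "c \<in> h ` W" using h0 W by force
    thus "v \<in> h ` W" using walk_closed[OF xs(1), of "h ` W"] xs closed by blast
  qed
  have inj: "inj_on h W"
  proof (rule inj_onI)
    fix a b assume a: "a \<in> W" and b: "b \<in> W" and e: "h a = h b"
    have cls: "x = 0 \<or> (1 \<le> x \<and> x \<le> n) \<or> (\<exists>i\<in>S. x = n + 1 + i)" if "x \<in> W" for x
      using that W by auto
    have wn: "i \<in> S \<Longrightarrow> wsk (gg i) \<notin> Nc \<and> wsk (gg i) \<noteq> c" for i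
      using F3[of "gg i" "wsk (gg i)"] F7 ggN S1 by blast
    have ww: "i \<in> S \<Longrightarrow> j \<in> S \<Longrightarrow> wsk (gg i) = wsk (gg j) \<Longrightarrow> i = j" for i j
      using F5[of "gg i" "gg j" "wsk (gg i)"] F7 ggN S1 ggi by (metis subsetD)
    show "a = b" using cls[OF a] cls[OF b] e
    proof (elim disjE bexE)
      show ?thesis if "a = 0" "b = 0" using that by simp
      show ?thesis if "a = 0" "1 \<le> b \<and> b \<le> n" using that e h0 h1[of b] F1 ggN by force
      show ?thesis if "a = 0" "i \<in> S" "b = n + 1 + i" for i using that e h0 h2 wn by force
      show ?thesis if "1 \<le> a \<and> a \<le> n" "b = 0" using that e h0 h1[of a] F1 ggN by force
      show ?thesis if "1 \<le> a \<and> a \<le> n" "1 \<le> b \<and> b \<le> n" using that e h1 ggi by force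
      show ?thesis if "1 \<le> a \<and> a \<le> n" "i \<in> S" "b = n + 1 + i" for i
        using that e h1[of a] h2 wn ggN by force
      show ?thesis if "i \<in> S" "a = n + 1 + i" "b = 0" for i using that e h0 h2 wn by force
      show ?thesis if "i \<in> S" "a = n + 1 + i" "1 \<le> b \<and> b \<le> n" for i
        using that e h1[of b] h2 wn ggN by force
      show ?thesis if "i \<in> S" "a = n + 1 + i" "j \<in> S" "b = n + 1 + j" for i j using that e h2 ww by force
    qed
  qed
  have "bij_betw h W (verts G)" unfolding bij_betw_def using inj hW Wh by blast
  hence "isomorphic G (whiskered_star n S)" using iso_from_inv edges_ok unfolding W_def by blast
  moreover have "S \<subseteq> {0..n}" using S1 by auto
  ultimately show ?thesis by blast
qed

lemma Q_transfer:
  assumes s: "simple_graph G" and iso: "isomorphic G H" and cH: "c' \<in> verts H" and Q: "Qc H c'"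
  shows "\<exists>c. Qc G c"
proof -
  obtain f where bij: "bij_betw f (verts G) (verts H)"
    and ed: "\<forall>u\<in>verts G. \<forall>v\<in>verts G. {u, v} \<in> edges G \<longleftrightarrow> {f u, f v} \<in> edges H"
    using iso unfolding isomorphic_def by blast
  have inj: "inj_on f (verts G)" using bij bij_betw_def by blast
  define c where "c = inv_into (verts G) f c'"
  have cV: "c \<in> verts G" and fc: "f c = c'" using bij cH unfolding c_def
    by (metis bij_betw_imp_surj_on inv_into_into, metis bij_betw_imp_surj_on f_inv_into_f)
  have "Qc G c" unfolding Qc_def
  proof (intro ballI impI)
    fix e g assume e: "e \<in> edges G" and g: "g \<in> edges G" and eg: "e \<noteq> g" and ce: "c \<notin> e" and cg: "c \<notin> g"
    obtain u1 u2 where u: "e = {u1, u2}" "u1 \<in> verts G" "u2 \<in> verts G" using e s unfolding simple_graph_def by blast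
    obtain v1 v2 where v: "g = {v1, v2}" "v1 \<in> verts G" "v2 \<in> verts G" using g s unfolding simple_graph_def by blast
    have eH: "f ` e \<in> edges H" using ed u e by auto
    have gH: "f ` g \<in> edges H" using ed v g by auto
    have sub: "e \<subseteq> verts G" "g \<subseteq> verts G" using u v by auto
    have "f ` e \<noteq> f ` g" using inj_on_image_eq_iff[OF inj sub] eg by simp
    moreover have "c' \<notin> f ` e" using ce cV sub(1) inj fc by (auto dest: inj_onD)
    moreover have "c' \<notin> f ` g" using cg cV sub(2) inj fc by (auto dest: inj_onD)
    ultimately have "f ` e \<inter> f ` g = {}" using Q eH gH unfolding Qc_def by blast
    thus "e \<inter> g = {}" by blast
  qed
  thus ?thesis by blast
qed

lemma Q_star: "Qc (star_graph n) 0"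
  unfolding Qc_def star_graph_def edges_def by auto

lemma Q_whisk: "S \<subseteq> {0..n} \<Longrightarrow> Qc (whiskered_star n S) 0"
  unfolding Qc_def whiskered_star_def edges_def by auto

lemma Q_path: "2 \<le> n \<Longrightarrow> n \<le> 5 \<Longrightarrow> Qc (path_graph n) (if n = 5 then 3 else 2)"
  unfolding Qc_def path_graph_def edges_def by (auto simp: doubleton_eq_iff)

lemma Q_broom: "1 \<le> n \<Longrightarrow> n \<le> 3 \<or> (n = 4 \<and> m = 0) \<Longrightarrow> Qc (broom n m) (if n \<le> 3 then 1 else 2)"
  unfolding Qc_def broom_def edges_def by (auto simp: doubleton_eq_iff)

lemma walk_pot:
  assumes "\<And>x y. {x, y} \<in> edges G \<Longrightarrow> \<bar>p x - p y\<bar> \<le> (1::int)" "walk G xs"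
  shows "\<bar>p (hd xs) - p (last xs)\<bar> \<le> int (length xs) - 1"
  using assms(2)
proof (induction xs)
  case Nil thus ?case by (simp add: walk_Nil)
next
  case (Cons x xs)
  show ?case
  proof (cases xs)
    case Nil thus ?thesis by simp
  next
    case (Cons y ys)
    note xs = this
    have w: "walk G (x # y # ys)" using Cons.prems xs by simp
    have "walk G xs" "{x, y} \<in> edges G" using walk_Cons2[of G x y ys] w xs by simp_all
    hence "\<bar>p y - p (last xs)\<bar> \<le> int (length xs) - 1" "\<bar>p x - p y\<bar> \<le> 1"
      using Cons.IH xs assms(1) by auto
    thus ?thesis using xs by auto
  qed
qed

lemma dist_ge:
  assumes "\<And>x y. {x, y} \<in> edges G \<Longrightarrow> \<bar>p x - p y\<bar> \<le> (1::int)"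
    "walk G xs" "hd xs = u" "last xs = v"
  shows "\<bar>p u - p v\<bar> \<le> int (dist G u v)"
proof -
  have ex: "\<exists>k. \<exists>xs. walk G xs \<and> hd xs = u \<and> last xs = v \<and> length xs = Suc k"
    using assms(2-4) walk_Nil by (metis length_greater_0_conv Suc_pred)
  obtain ys where ys: "walk G ys" "hd ys = u" "last ys = v" "length ys = Suc (dist G u v)"
    using LeastI_ex[OF ex] unfolding dist_def by blast
  show ?thesis using walk_pot[OF assms(1) ys(1)] ys by simp
qed

lemma diam_ge:
  assumes "finite (verts G)" "u \<in> verts G" "v \<in> verts G"
  shows "dist G u v \<le> diameter G"
proof -
  have "{dist G u v | u v. u \<in> verts G \<and> v \<in> verts G} = (\<lambda>(u, v). dist G u v) ` (verts G \<times> verts G)"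
    by auto
  hence fin: "finite {dist G u v | u v. u \<in> verts G \<and> v \<in> verts G}" using assms(1) by simp
  show ?thesis unfolding diameter_def by (rule Max_ge[OF fin]) (use assms in blast)
qed

lemma broom_pot:
  assumes "{x, y} \<in> edges (broom n m)"
  shows "\<bar>(if x \<le> n then int x else 0) - (if y \<le> n then int y else 0)\<bar> \<le> 1"
  using assms unfolding broom_def edges_def by (auto simp: doubleton_eq_iff)

lemma broom_path_edge: "1 \<le> i \<Longrightarrow> Suc i \<le> n \<Longrightarrow> {i, Suc i} \<in> edges (broom n m)"
  unfolding broom_def edges_def by auto

lemma broom_leaf_edge: "n < j \<Longrightarrow> j \<le> n + m \<Longrightarrow> {j, 1} \<in> edges (broom n m)"
  unfolding broom_def edges_def by (auto simp: insert_commute)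

lemma broom_verts: "verts (broom n m) = {1..n + m}"
  unfolding broom_def verts_def by simp

lemma broom_diam:
  assumes "1 \<le> n" "diameter (broom n m) = 3"
  shows "n \<le> 3 \<or> (n = 4 \<and> m = 0)"
proof (rule ccontr)
  assume a: "\<not> (n \<le> 3 \<or> (n = 4 \<and> m = 0))"
  let ?p = "\<lambda>x. if x \<le> n then int x else 0"
  have fin: "finite (verts (broom n m))" by (simp add: broom_verts)
  have "\<exists>xs u v. walk (broom n m) xs \<and> hd xs = u \<and> last xs = v \<and> u \<in> verts (broom n m)
      \<and> v \<in> verts (broom n m) \<and> \<bar>?p u - ?p v\<bar> \<ge> 4"
  proof (cases "n \<ge> 5")
    case True
    have "walk (broom n m) [1, 2, 3, 4, 5]"
      using True broom_path_edge[of 1 n m] broom_path_edge[of 2 n m] broom_path_edge[of 3 n m]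
        broom_path_edge[of 4 n m]
      by (simp add: walk_Cons2 walk_single broom_verts numeral_eq_Suc)
    thus ?thesis using True by (intro exI[of _ "[1, 2, 3, 4, 5]"] exI[of _ 1] exI[of _ 5]) (auto simp: broom_verts)
  next
    case False
    hence n4: "n = 4" "m \<ge> 1" using a by auto
    have "walk (broom n m) [5, 1, 2, 3, 4]"
      using n4 broom_leaf_edge[of n 5 m] broom_path_edge[of 1 n m] broom_path_edge[of 2 n m]
        broom_path_edge[of 3 n m]
      by (simp add: walk_Cons2 walk_single broom_verts numeral_eq_Suc)
    thus ?thesis using n4 by (intro exI[of _ "[5, 1, 2, 3, 4]"] exI[of _ 5] exI[of _ 4]) (auto simp: broom_verts)
  qed
  then obtain xs u v where w: "walk (broom n m) xs" "hd xs = u" "last xs = v" "u \<in> verts (broom n m)"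
      "v \<in> verts (broom n m)" "\<bar>?p u - ?p v\<bar> \<ge> 4" by blast
  have "\<bar>?p u - ?p v\<bar> \<le> int (dist (broom n m) u v)" by (rule dist_ge[OF _ w(1-3)]) (rule broom_pot)
  moreover have "dist (broom n m) u v \<le> 3" using diam_ge[OF fin w(4,5)] assms(2) by simp
  ultimately show False using w(6) by linarith
qed

theorem corollary2p11:
  fixes T :: "'a sgraph"
  assumes "tree T"
  shows "co_chordal (line_graph T) \<longleftrightarrow>
    ((\<exists>n. isomorphic T (star_graph n)) \<or>
     (\<exists>n m. 1 \<le> n \<and> diameter (broom n m) = 3 \<and> isomorphic T (broom n m)) \<or>
     (\<exists>n S. S \<subseteq> {0..n} \<and> isomorphic T (whiskered_star n S)) \<or>
     (\<exists>n. 2 \<le> n \<and> n \<le> 5 \<and> isomorphic T (path_graph n)))"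
proof
  assume "co_chordal (line_graph T)"
  hence "noP3 T" by (rule cochordal_noP3)
  then obtain c where "c \<in> verts T" "Qc T c" using exists_center[OF assms] by blast
  thus "(\<exists>n. isomorphic T (star_graph n)) \<or>
     (\<exists>n m. 1 \<le> n \<and> diameter (broom n m) = 3 \<and> isomorphic T (broom n m)) \<or>
     (\<exists>n S. S \<subseteq> {0..n} \<and> isomorphic T (whiskered_star n S)) \<or>
     (\<exists>n. 2 \<le> n \<and> n \<le> 5 \<and> isomorphic T (path_graph n))"
    using whiskered_of_Q[OF assms] by blast
next
  have s: "simple_graph T" using assms unfolding tree_def by simp
  assume "(\<exists>n. isomorphic T (star_graph n)) \<or>
     (\<exists>n m. 1 \<le> n \<and> diameter (broom n m) = 3 \<and> isomorphic T (broom n m)) \<or>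
     (\<exists>n S. S \<subseteq> {0..n} \<and> isomorphic T (whiskered_star n S)) \<or>
     (\<exists>n. 2 \<le> n \<and> n \<le> 5 \<and> isomorphic T (path_graph n))"
  hence "\<exists>c. Qc T c"
  proof (elim disjE exE conjE)
    fix n assume "isomorphic T (star_graph n)"
    moreover have "(0::nat) \<in> verts (star_graph n)" unfolding star_graph_def verts_def by simp
    ultimately show ?thesis using Q_transfer[OF s _ _ Q_star] by blast
  next
    fix n m assume a: "1 \<le> n" "diameter (broom n m) = 3" "isomorphic T (broom n m)"
    have b: "n \<le> 3 \<or> (n = 4 \<and> m = 0)" using broom_diam[OF a(1,2)] .
    have "(if n \<le> 3 then 1 else 2::nat) \<in> verts (broom n m)" using a(1) b by (auto simp: broom_verts)
    thus ?thesis using Q_transfer[OF s a(3) _ Q_broom[OF a(1) b]] by blast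
  next
    fix n S assume a: "S \<subseteq> {0..n}" "isomorphic T (whiskered_star n S)"
    have "(0::nat) \<in> verts (whiskered_star n S)" unfolding whiskered_star_def verts_def by simp
    thus ?thesis using Q_transfer[OF s a(2) _ Q_whisk[OF a(1)]] by blast
  next
    fix n assume a: "2 \<le> n" "n \<le> 5" "isomorphic T (path_graph n)"
    have "(if n = 5 then 3 else 2::nat) \<in> verts (path_graph n)" using a unfolding path_graph_def verts_def by auto
    thus ?thesis using Q_transfer[OF s a(3) _ Q_path[OF a(1,2)]] by blast
  qed
  then obtain c where "Qc T c" by blast
  thus "co_chordal (line_graph T)" unfolding co_chordal_def by (rule Q_chordal)
qed

end
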